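(* Let $N\ge2$ and $L=(a_1,\dots,a_N)\in\mathbb{N}_0^N$ with $a_1>0$, and let $H$ be the sequence defined by $H_n=1+\sum_{k=1}^{n-1}a_kH_{n-k}$ for $1\le n\le N+1$ and $H_{n+N}=a_1H_{n+N-1}+\cdots+a_{N-1}H_{n+1}+(1+a_N)H_n$ for all $n\in\mathbb{N}$. Let $\psi$ be the unique positive real zero of $g(x)=x^N-\sum_{k=1}^{N-1}a_kx^{N-k}-(1+a_N)$. Then there are positive real constants $\delta$ and $r$ with $r<1$ such that $H_n=\delta\psi^n+O(\psi^{rn})$ for $n\in\mathbb{N}$.
   Context: $\mathbb{N}_0=\mathbb{N}\cup\{0\}$. (The sequence $H$ is the fundamental sequence of the periodic Zeckendorf collection with principal maximal block $L$; $g$ has exactly one positive real zero, it is simple, and all other complex zeros have modulus less than $\psi$.) *)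

theory Defs
  imports "HOL-Analysis.Analysis" "HOL-Library.Landau_Symbols"
begin

definition gpoly :: "nat \<Rightarrow> (nat \<Rightarrow> nat) \<Rightarrow> real \<Rightarrow> real" where
  "gpoly N a x = x ^ N - (\<Sum>k=1..N-1. real (a k) * x ^ (N - k)) - (1 + real (a N))"

end

theory Submission
  imports Defs
begin

locale crec =
  fixes N :: nat and w :: "nat \<Rightarrow> real" and v :: "nat \<Rightarrow> real"
  assumes N1: "N \<ge> 1" and wnn: "\<And>k. w k \<ge> 0" and w1: "w 1 > 0"
    and wsum: "(\<Sum>k=1..N. w k) = 1"
    and rec: "\<And>n. v (n+N) = (\<Sum>k=1..N. w k * v (n+N-k))"
    and vpos: "\<And>n. v n > 0"
begin

lemma wsum' [simp]: "sum w {Suc 0..N} = 1" using wsum by simp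

lemma step_bounds:
  assumes "\<And>k. k \<in> {1..N} \<Longrightarrow> lo \<le> v (n+N-k) \<and> v (n+N-k) \<le> hi"
  shows "lo \<le> v (n+N) \<and> v (n+N) \<le> hi"
proof -
  have "(\<Sum>k=1..N. w k * lo) \<le> (\<Sum>k=1..N. w k * v (n+N-k))"
    by (rule sum_mono) (use assms wnn in \<open>auto intro: mult_left_mono\<close>)
  moreover have "(\<Sum>k=1..N. w k * v (n+N-k)) \<le> (\<Sum>k=1..N. w k * hi)"
    by (rule sum_mono) (use assms wnn in \<open>auto intro: mult_left_mono\<close>)
  moreover have "(\<Sum>k=1..N. w k * lo) = lo" "(\<Sum>k=1..N. w k * hi) = hi"
    by (simp_all add: sum_distrib_right[symmetric] wsum)
  ultimately show ?thesis using rec[of n] by simp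
qed

lemma invariance:
  assumes "\<And>i. n \<le> i \<Longrightarrow> i < n+N \<Longrightarrow> lo \<le> v i \<and> v i \<le> hi"
  shows "n \<le> i \<Longrightarrow> lo \<le> v i \<and> v i \<le> hi"
proof (induction i rule: less_induct)
  case (less i)
  show ?case
  proof (cases "i < n+N")
    case True with less assms show ?thesis by auto
  next
    case False
    define j where "j = i - N"
    have j: "i = j + N" "n \<le> j" using False j_def by auto
    have "lo \<le> v (j+N-k) \<and> v (j+N-k) \<le> hi" if "k\<in>{1..N}" for k
      using less.IH[of "j+N-k"] that j by auto
    then show ?thesis using step_bounds j by blast
  qed
qed

lemma push_lo:
  assumes "\<And>i. n \<le> i \<Longrightarrow> lo \<le> v i" and "n + N \<le> i+1"
  shows "w 1 * (v i - lo) \<le> v (i+1) - lo"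
proof -
  define p where "p = i+1-N"
  have p: "i+1 = p + N" "n \<le> p" using assms(2) p_def by auto
  have pi: "p + N - 1 = i" using p by simp
  have "v (i+1) - lo = (\<Sum>k=1..N. w k * v (p+N-k)) - (\<Sum>k=1..N. w k * lo)"
    using rec[of p] p by (simp add: sum_distrib_right[symmetric] wsum)
  also have "\<dots> = (\<Sum>k=1..N. w k * (v (p+N-k) - lo))"
    by (simp add: sum_subtractf right_diff_distrib)
  also have "\<dots> = w 1 * (v (p+N-1) - lo) + (\<Sum>k=Suc 1..N. w k * (v (p+N-k) - lo))"
    using N1 by (simp add: sum.atLeast_Suc_atMost)
  also have "\<dots> \<ge> w 1 * (v (p+N-1) - lo)"
  proof -
    have "(\<Sum>k=Suc 1..N. w k * (v (p+N-k) - lo)) \<ge> 0"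
      by (rule sum_nonneg) (use wnn assms(1) p in \<open>auto\<close>)
    then show ?thesis by simp
  qed
  finally show ?thesis by (simp only: pi)
qed

lemma push_hi:
  assumes "\<And>i. n \<le> i \<Longrightarrow> v i \<le> hi" and "n + N \<le> i+1"
  shows "w 1 * (hi - v i) \<le> hi - v (i+1)"
proof -
  define p where "p = i+1-N"
  have p: "i+1 = p + N" "n \<le> p" using assms(2) p_def by auto
  have pi: "p + N - 1 = i" using p by simp
  have "hi - v (i+1) = (\<Sum>k=1..N. w k * hi) - (\<Sum>k=1..N. w k * v (p+N-k))"
    using rec[of p] p by (simp add: sum_distrib_right[symmetric] wsum)
  also have "\<dots> = (\<Sum>k=1..N. w k * (hi - v (p+N-k)))"
    by (simp add: sum_subtractf right_diff_distrib)
  also have "\<dots> = w 1 * (hi - v (p+N-1)) + (\<Sum>k=Suc 1..N. w k * (hi - v (p+N-k)))"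
    using N1 by (simp add: sum.atLeast_Suc_atMost)
  also have "\<dots> \<ge> w 1 * (hi - v (p+N-1))"
  proof -
    have "(\<Sum>k=Suc 1..N. w k * (hi - v (p+N-k))) \<ge> 0"
      by (rule sum_nonneg) (use wnn assms(1) p in \<open>auto\<close>)
    then show ?thesis by simp
  qed
  finally show ?thesis by (simp only: pi)
qed

lemma push_lo_iter:
  assumes "\<And>i. n \<le> i \<Longrightarrow> lo \<le> v i" "n+N \<le> i"
  shows "w 1 ^ j * (v i - lo) \<le> v (i+j) - lo"
proof (induction j)
  case 0 then show ?case by simp
next
  case (Suc j)
  have "w 1 ^ Suc j * (v i - lo) = w 1 * (w 1 ^ j * (v i - lo))" by simp
  also have "\<dots> \<le> w 1 * (v (i+j) - lo)" using Suc w1 by (intro mult_left_mono) auto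
  also have "\<dots> \<le> v (i+j+1) - lo" using push_lo[of n lo "i+j"] assms by auto
  finally show ?case by simp
qed

lemma push_hi_iter:
  assumes "\<And>i. n \<le> i \<Longrightarrow> v i \<le> hi" "n+N \<le> i"
  shows "w 1 ^ j * (hi - v i) \<le> hi - v (i+j)"
proof (induction j)
  case 0 then show ?case by simp
next
  case (Suc j)
  have "w 1 ^ Suc j * (hi - v i) = w 1 * (w 1 ^ j * (hi - v i))" by simp
  also have "\<dots> \<le> w 1 * (hi - v (i+j))" using Suc w1 by (intro mult_left_mono) auto
  also have "\<dots> \<le> hi - v (i+j+1)" using push_hi[of n hi "i+j"] assms by auto
  finally show ?case by simp
qed

definition m where "m n = Min (v ` {n..<n+N})"
definition M where "M n = Max (v ` {n..<n+N})"

lemma win: "finite (v ` {n..<n+N})" "v ` {n..<n+N} \<noteq> {}"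
  using N1 by auto

lemma m_le: "n \<le> i \<Longrightarrow> i < n+N \<Longrightarrow> m n \<le> v i"
  unfolding m_def using win by (intro Min_le) auto
lemma M_ge: "n \<le> i \<Longrightarrow> i < n+N \<Longrightarrow> v i \<le> M n"
  unfolding M_def using win by (intro Max_ge) auto

lemma inv: "n \<le> i \<Longrightarrow> m n \<le> v i \<and> v i \<le> M n"
  using invariance[of n "m n" "M n" i] m_le M_ge by blast

lemma m_mono: "n \<le> p \<Longrightarrow> m n \<le> m p"
  unfolding m_def[of p] using win inv by (auto simp: Min_ge_iff)
lemma M_mono: "n \<le> p \<Longrightarrow> M p \<le> M n"
  unfolding M_def[of p] using win inv by (auto simp: Max_le_iff)

lemma m_le_M: "m n \<le> M p"
proof -
  have "m n \<le> m (max n p)" by (rule m_mono) simp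
  also have "\<dots> \<le> v (max n p)" using inv by blast
  also have "\<dots> \<le> M (max n p)" using inv by blast
  also have "\<dots> \<le> M p" by (rule M_mono) simp
  finally show ?thesis .
qed

definition e where "e = w 1 ^ (N-1) / 2"

lemma w1_le: "w 1 \<le> 1"
proof -
  have "w 1 \<le> (\<Sum>k=1..N. w k)" using N1 wnn by (intro member_le_sum) auto
  then show ?thesis using wsum by simp
qed

lemma e_pos: "0 < e" "e \<le> 1/2"
  using w1 w1_le by (auto simp: e_def power_le_one)

lemma contraction: "M (n+N) - m (n+N) \<le> (1 - e) * (M n - m n)"
proof -
  let ?x = "v (n+N)"
  let ?D = "M n - m n"
  have pw: "w 1 ^ (N-1) \<le> w 1 ^ j" if "j < N" for j
    using that w1 w1_le by (intro power_decreasing) auto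
  have eq: "(1 - e) * ?D = ?D - w 1 ^ (N-1) * (?D/2)" by (simp add: e_def algebra_simps)
  have x: "m n \<le> ?x" "?x \<le> M n" using inv by auto
  have win2: "\<And>i. i \<in> {n+N..<n+N+N} \<Longrightarrow> \<exists>j<N. i = n+N+j"
    by (metis atLeastLessThan_iff le_add_diff_inverse add_less_cancel_left)
  show ?thesis
  proof (cases "?x - m n \<ge> ?D/2")
    case True
    have "m n + w 1 ^ (N-1) * (?D/2) \<le> v i" if "i \<in> {n+N..<n+N+N}" for i
    proof -
      define j where "j = i - (n+N)"
      have ij: "i = n+N+j" "j < N" using that j_def by auto
      note that = ij(2)
      have "v (n+N+j) = v i" using ij by simp
      have "w 1 ^ (N-1) * (?D/2) \<le> w 1 ^ j * (?D/2)"
        using pw[OF that] m_le_M[of n n] by (intro mult_right_mono) auto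
      also have "\<dots> \<le> w 1 ^ j * (?x - m n)"
        using True w1 by (intro mult_left_mono) auto
      also have "\<dots> \<le> v (n+N+j) - m n"
        using push_lo_iter[of n "m n" "n+N" j] inv by auto
      finally show ?thesis using ij by simp
    qed
    then have "m n + w 1 ^ (N-1) * (?D/2) \<le> m (n+N)"
      unfolding m_def[of "n+N"] using win by (auto simp: Min_ge_iff)
    moreover have "M (n+N) \<le> M n" by (rule M_mono) simp
    ultimately show ?thesis using eq by linarith
  next
    case False
    then have F: "M n - ?x \<ge> ?D/2" by simp
    have "v i \<le> M n - w 1 ^ (N-1) * (?D/2)" if "i \<in> {n+N..<n+N+N}" for i
    proof -
      define j where "j = i - (n+N)"
      have ij: "i = n+N+j" "j < N" using that j_def by auto
      note that = ij(2)
      have "v (n+N+j) = v i" using ij by simp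
      have "w 1 ^ (N-1) * (?D/2) \<le> w 1 ^ j * (?D/2)"
        using pw[OF that] m_le_M[of n n] by (intro mult_right_mono) auto
      also have "\<dots> \<le> w 1 ^ j * (M n - ?x)"
        using F w1 by (intro mult_left_mono) auto
      also have "\<dots> \<le> M n - v (n+N+j)"
        using push_hi_iter[of n "M n" "n+N" j] inv by auto
      finally show ?thesis using ij by simp
    qed
    then have "M (n+N) \<le> M n - w 1 ^ (N-1) * (?D/2)"
      unfolding M_def[of "n+N"] using win by (auto simp: Max_le_iff)
    moreover have "m n \<le> m (n+N)" by (rule m_mono) simp
    ultimately show ?thesis using eq by linarith
  qed
qed

definition D where "D n = M n - m n"

lemma D_nonneg: "0 \<le> D n" using m_le_M[of n n] by (simp add: D_def)

lemma D_mono: "n \<le> p \<Longrightarrow> D p \<le> D n"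
  using m_mono M_mono unfolding D_def by (meson diff_mono)

lemma D_iter: "D (k*N) \<le> (1-e)^k * D 0"
proof (induction k)
  case 0 then show ?case by simp
next
  case (Suc k)
  have "D (Suc k * N) = D (k*N + N)" by (simp add: add.commute)
  also have "\<dots> \<le> (1-e) * D (k*N)" using contraction[of "k*N"] by (simp add: D_def)
  also have "\<dots> \<le> (1-e) * ((1-e)^k * D 0)" using Suc e_pos by (intro mult_left_mono) auto
  finally show ?case by simp
qed

lemma D_bound: "D n \<le> (1-e)^(n div N) * D 0"
proof -
  have "D n \<le> D ((n div N) * N)" by (rule D_mono) simp
  then show ?thesis using D_iter[of "n div N"] by simp
qed

lemma geometric: "\<exists>\<delta> C \<rho>. \<delta> > 0 \<and> 0 < \<rho> \<and> \<rho> < 1 \<and> (\<forall>n. \<bar>v n - \<delta>\<bar> \<le> C * \<rho>^n)"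
proof -
  define \<delta> where "\<delta> = Sup (range m)"
  have bdd: "bdd_above (range m)" using m_le_M[of _ 0] by (intro bdd_aboveI2) auto
  have dlo: "m n \<le> \<delta>" for n unfolding \<delta>_def using bdd by (intro cSUP_upper) auto
  have dhi: "\<delta> \<le> M n" for n unfolding \<delta>_def using m_le_M by (intro cSUP_least) auto
  have dpos: "\<delta> > 0"
  proof -
    have "m 0 > 0" unfolding m_def using win vpos by (auto simp: Min_gr_iff)
    then show ?thesis using dlo[of 0] by simp
  qed
  define q where "q = 1 - e"
  have q: "0 < q" "q < 1" using e_pos by (auto simp: q_def)
  define \<rho> where "\<rho> = root N q"
  have \<rho>: "0 < \<rho>" "\<rho> < 1" "\<rho> ^ N = q" using q N1 by (auto simp: \<rho>_def real_root_pow_pos2)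
  have "\<bar>v n - \<delta>\<bar> \<le> D 0 / q * \<rho> ^ n" for n
  proof -
    have "\<bar>v n - \<delta>\<bar> \<le> D n" using inv[of n n] dlo[of n] dhi[of n] by (auto simp: D_def)
    also have "\<dots> \<le> q ^ (n div N) * D 0" using D_bound by (simp add: q_def)
    also have "q ^ (n div N) \<le> \<rho> ^ n / q"
    proof -
      have "n \<le> N * Suc (n div N)"
      proof -
        have "N * (n div N) + n mod N = n" by (rule mult_div_mod_eq)
        moreover have "n mod N < N" using N1 by simp
        moreover have "N * Suc (n div N) = N * (n div N) + N" by simp
        ultimately show ?thesis by linarith
      qed
      then have "\<rho> ^ (N * Suc (n div N)) \<le> \<rho> ^ n" using \<rho> by (intro power_decreasing) auto
      moreover have "\<rho> ^ (N * Suc (n div N)) = q ^ (n div N) * q"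
        by (simp only: power_mult \<rho>(3)) simp
      ultimately show ?thesis using q by (simp add: field_simps)
    qed
    then have "q ^ (n div N) * D 0 \<le> \<rho> ^ n / q * D 0" using D_nonneg by (intro mult_right_mono) auto
    finally show ?thesis by (simp add: mult.commute)
  qed
  then show ?thesis using dpos \<rho> by blast
qed

end
theorem theorem6p7:
  fixes N :: nat and a :: "nat \<Rightarrow> nat" and H :: "nat \<Rightarrow> nat" and \<psi> :: real
  assumes hN: "N \<ge> 2"
    and ha1: "a 1 > 0"
    and hinit: "\<And>n. 1 \<le> n \<Longrightarrow> n \<le> N + 1 \<Longrightarrow>
                  H n = 1 + (\<Sum>k=1..n-1. a k * H (n - k))"
    and hrec: "\<And>n. 1 \<le> n \<Longrightarrow>
                  H (n + N) = (\<Sum>k=1..N-1. a k * H (n + N - k)) + (1 + a N) * H n"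
    and hpsi_pos: "\<psi> > 0"
    and hpsi_root: "gpoly N a \<psi> = 0"
  shows "\<exists>\<delta> r. \<delta> > 0 \<and> r > 0 \<and> r < 1 \<and>
           (\<lambda>n. real (H n) - \<delta> * \<psi> ^ n) \<in> O(\<lambda>n. \<psi> powr (r * real n))"
proof -
  define c where "c k = (if k = N then 1 + real (a N) else real (a k))" for k
  define w where "w k = c k / \<psi> ^ k" for k
  define v where "v n = real (H (n+1)) / \<psi> ^ (n+1)" for n
  have cnn: "c k \<ge> 0" for k by (simp add: c_def)
  have splitN: "(\<Sum>k=1..N. f k) = (\<Sum>k=1..N-1. f k) + f N" for f :: "nat \<Rightarrow> real"
  proof -
    have "{1..N} = insert N {1..N-1}" using hN by auto
    moreover have "N \<notin> {1..N-1}" using hN by auto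
    ultimately show ?thesis by (simp add: add.commute)
  qed
  have cN: "(\<Sum>k=1..N-1. c k * g k) = (\<Sum>k=1..N-1. real (a k) * g k)" for g
    by (rule sum.cong) (auto simp: c_def)
  have H1: "H n \<ge> 1" if "n \<ge> 1" for n
    using that
  proof (induction n rule: less_induct)
    case (less n)
    show ?case
    proof (cases "n \<le> N+1")
      case True then show ?thesis using hinit[of n] less.prems by simp
    next
      case False
      define p where "p = n - N"
      have p: "n = p + N" "1 \<le> p" "p < n" using False p_def hN by auto
      have "H p \<ge> 1" using less.IH p by auto
      moreover have "H n \<ge> (1 + a N) * H p" using hrec[of p] p by simp
      moreover have "H p \<le> (1 + a N) * H p" by simp
      ultimately show ?thesis by linarith
    qed
  qed
  have hrec': "real (H (n+N)) = (\<Sum>k=1..N. c k * real (H (n+N-k)))" if "n \<ge> 1" for n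
  proof -
    have "real (H (n+N)) = (\<Sum>k=1..N-1. real (a k) * real (H (n + N - k))) + (1 + real (a N)) * real (H n)"
      using hrec[OF that] by (simp add: algebra_simps)
    then show ?thesis by (simp only: splitN cN) (simp add: c_def)
  qed
  have wnn: "w k \<ge> 0" for k using cnn hpsi_pos by (simp add: w_def)
  have w1: "w 1 > 0" using ha1 hN hpsi_pos by (simp add: w_def c_def)
  have wsum: "(\<Sum>k=1..N. w k) = 1"
  proof -
    have "\<psi> ^ N * (\<Sum>k=1..N. w k) = (\<Sum>k=1..N. c k * \<psi> ^ (N-k))"
      unfolding sum_distrib_left
    proof (rule sum.cong)
      fix k assume "k \<in> {1..N}"
      then have "\<psi> ^ N = \<psi> ^ (N-k) * \<psi> ^ k" by (simp flip: power_add)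
      then show "\<psi> ^ N * w k = c k * \<psi> ^ (N-k)" using hpsi_pos by (simp add: w_def)
    qed simp
    also have "\<dots> = (\<Sum>k=1..N-1. real (a k) * \<psi> ^ (N-k)) + (1 + real (a N))"
      by (simp only: splitN cN) (simp add: c_def)
    also have "\<dots> = \<psi> ^ N" using hpsi_root by (simp add: gpoly_def)
    finally show ?thesis using hpsi_pos by simp
  qed
  have vrec: "v (n+N) = (\<Sum>k=1..N. w k * v (n+N-k))" for n
  proof -
    have "v (n+N) = (\<Sum>k=1..N. c k * real (H (n+1+N-k))) / \<psi> ^ (n+1+N)"
      using hrec'[of "n+1"] by (simp add: v_def add.commute add.left_commute)
    also have "\<dots> = (\<Sum>k=1..N. w k * v (n+N-k))"
      unfolding sum_divide_distrib
    proof (rule sum.cong)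
      fix k assume k: "k \<in> {1..N}"
      then have e1: "\<psi> ^ (n+1+N) = \<psi> ^ k * \<psi> ^ (n+N-k+1)" by (simp flip: power_add)
      have e2: "n+1+N-k = n+N-k+1" using k by auto
      show "c k * real (H (n+1+N-k)) / \<psi> ^ (n+1+N) = w k * v (n+N-k)"
        unfolding e1 e2 using hpsi_pos by (simp add: w_def v_def)
    qed simp
    finally show ?thesis .
  qed
  have vpos: "v n > 0" for n using H1[of "n+1"] hpsi_pos by (simp add: v_def)
  interpret crec N w v
    by unfold_locales (use hN wnn w1 wsum vrec vpos in auto)
  obtain \<delta> C \<rho> where d: "\<delta> > 0" "0 < \<rho>" "\<rho> < 1" "\<And>n. \<bar>v n - \<delta>\<bar> \<le> C * \<rho>^n"
    using geometric by blast
  have psi1: "\<psi> > 1"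
  proof -
    have "w 1 + w N = (\<Sum>k\<in>{1,N}. w k)" using hN by simp
    also have "\<dots> \<le> (\<Sum>k=1..N. w k)" using hN wnn by (intro sum_mono2) auto
    finally have "w 1 + w N \<le> 1" using wsum by simp
    moreover have "w N > 0" using hpsi_pos by (simp add: w_def c_def)
    ultimately have "w 1 < 1" by simp
    then have "real (a 1) < \<psi>" using hN hpsi_pos by (simp add: w_def c_def)
    then show ?thesis using ha1 by linarith
  qed
  define r where "r = max (1/2) (ln (\<psi> * \<rho>) / ln \<psi>)"
  have lnpos: "ln \<psi> > 0" using psi1 by simp
  have r: "r > 0" "r < 1"
  proof -
    show "r > 0" by (simp add: r_def)
    have "ln (\<psi> * \<rho>) < ln \<psi>" using d hpsi_pos by simp
    then have "ln (\<psi> * \<rho>) / ln \<psi> < 1" using lnpos by simp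
    then show "r < 1" by (simp add: r_def)
  qed
  have pr: "\<psi> * \<rho> \<le> \<psi> powr r"
  proof -
    have "\<psi> * \<rho> = \<psi> powr (ln (\<psi> * \<rho>) / ln \<psi>)"
      using hpsi_pos d lnpos by (simp add: powr_def)
    also have "\<dots> \<le> \<psi> powr r" using psi1 by (intro powr_mono) (auto simp: r_def)
    finally show ?thesis .
  qed
  have bound: "\<bar>real (H n) - \<delta> * \<psi> ^ n\<bar> \<le> (\<bar>C\<bar> / \<rho>) * \<bar>\<psi> powr (r * real n)\<bar>" if "n \<ge> 1" for n
  proof -
    have Hn: "real (H n) = \<psi> ^ n * v (n-1)" using that hpsi_pos by (simp add: v_def)
    have "\<bar>real (H n) - \<delta> * \<psi> ^ n\<bar> = \<psi> ^ n * \<bar>v (n-1) - \<delta>\<bar>"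
    proof -
      have "\<psi> ^ n * v (n-1) - \<delta> * \<psi> ^ n = \<psi> ^ n * (v (n-1) - \<delta>)" by (simp add: algebra_simps)
      then show ?thesis using hpsi_pos by (simp add: Hn abs_mult)
    qed
    also have "\<dots> \<le> \<psi> ^ n * (\<bar>C\<bar> * \<rho> ^ (n-1))"
    proof -
      have "C * \<rho> ^ (n-1) \<le> \<bar>C\<bar> * \<rho> ^ (n-1)" using d by (intro mult_right_mono) auto
      then have "\<bar>v (n-1) - \<delta>\<bar> \<le> \<bar>C\<bar> * \<rho> ^ (n-1)" using d(4)[of "n-1"] by linarith
      then show ?thesis using hpsi_pos by (intro mult_left_mono) auto
    qed
    also have "\<rho> ^ (n-1) = \<rho> ^ n / \<rho>" using that d by (cases n) auto
    also have "\<psi> ^ n * (\<bar>C\<bar> * (\<rho> ^ n / \<rho>)) = (\<bar>C\<bar> / \<rho>) * (\<psi> * \<rho>) ^ n"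
      by (simp add: power_mult_distrib)
    also have "(\<bar>C\<bar> / \<rho>) * (\<psi> * \<rho>) ^ n \<le> (\<bar>C\<bar> / \<rho>) * (\<psi> powr r) ^ n"
      using pr hpsi_pos d by (intro mult_left_mono power_mono) auto
    also have "(\<psi> powr r) ^ n = \<psi> powr (r * real n)"
      using hpsi_pos by (simp add: powr_realpow[symmetric] powr_powr)
    also have "\<psi> powr (r * real n) = \<bar>\<psi> powr (r * real n)\<bar>" by simp
    finally show ?thesis .
  qed
  have "(\<lambda>n. real (H n) - \<delta> * \<psi> ^ n) \<in> O(\<lambda>n. \<psi> powr (r * real n))"
    by (rule bigoI[where c = "\<bar>C\<bar> / \<rho>"]) (use bound in \<open>auto simp: eventually_at_top_linorder\<close>)
  then show ?thesis using d r by blast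
qed

end
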